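(* In the setting below, the vector $R=1\otimes e^{-\lambda_1+\lambda_6}+1\otimes e^{\lambda_3-\lambda_5}-1\otimes e^{\lambda_1-\lambda_3+\lambda_5-\lambda_6}\in V^{\Lambda_1}$ is a highest weight vector of type $Vir(\tfrac45,\tfrac23)\otimes W^{\Omega_0}$, i.e. it satisfies (HW1)–(HW5) with $h=2/3$ and $\omega_j=0$.
   Context: Setting. $Q$ is the $E_6$ root lattice with simple roots $\alpha_1,\dots,\alpha_6$ (Dynkin chain $\alpha_1-\alpha_3-\alpha_4-\alpha_5-\alpha_6$, $\alpha_2$ attached to $\alpha_4$), form from the Cartan matrix, fundamental weights $\lambda_i$, $P=\bigoplus\mathbb Z\lambda_i$, $\mathfrak h=\mathbb C\otimes P$. $\varepsilon$ bimultiplicative on $P$ with $[\varepsilon(\lambda_i,\lambda_j)]$ rows $(1,1,1,1,1,1)$, $(-1,1,1,1,1,-1)$, $(-1,1,1,1,1,1)$, $(1,-1,1,1,1,1)$, $(1,1,1,1,1,-1)$, $(1,1,1,1,1,1)$. $V_P=S(\hat{\mathfrak h}^-)\otimes\mathbb C[P]$ with Heisenberg operators $h(n)$ ($[h(m),h'(n)]=m\langle h,h'\rangle\delta_{m+n,0}$, $h(n)1=0$ for $n>0$, $h(0)(u\otimes e^\beta)=\langle h,\beta\rangle u\otimes e^\beta$). For $\alpha\in Q$, acting on $V_P$: $Y(1\otimes e^\alpha,z)=\exp(\sum_{k\ge1}\frac{\alpha(-k)}kz^k)\exp(-\sum_{k\ge1}\frac{\alpha(k)}kz^{-k})e_\alpha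 z^{\alpha(0)}=\sum_n\{1\otimes e^\alpha\}_nz^{-n-1}$, $e_\alpha(u\otimes e^\beta)=\varepsilon(\alpha,\beta)u\otimes e^{\alpha+\beta}$, $z^{\alpha(0)}(u\otimes e^\beta)=z^{\langle\alpha,\beta\rangle}u\otimes e^\beta$; $Y(h_1(-1)\cdots h_k(-1)\otimes e^\alpha,z)=\,:h_1(z)\cdots h_k(z)Y(1\otimes e^\alpha,z):$, $h(z)=\sum_nh(n)z^{-n-1}$. $V^{\Lambda_1}$ is spanned by $S(\hat{\mathfrak h}^-)\otimes e^\nu$, $\nu\in\lambda_1+Q$. $\tau$: $\alpha_1\leftrightarrow\alpha_6$, $\alpha_3\leftrightarrow\alpha_5$ ($\lambda_1\leftrightarrow\lambda_6$, $\lambda_3\leftrightarrow\lambda_5$); $\mathrm{Proj}(\nu)=(\nu+\tau\nu)/2$. $\theta=\alpha_1+2\alpha_2+2\alpha_3+3\alpha_4+2\alpha_5+\alpha_6$. Raising operators of $\tilde{\mathfrak a}$ ($F_4^{(1)}$): $\{\beta_1\}_0=\{1\otimes e^{\alpha_2}\}_0$, $\{\beta_2\}_0=\{1\otimes e^{\alpha_4}\}_0$, $\{\beta_3\}_0=\{1\otimes e^{\alpha_3}\}_0+\{1\otimes e^{\alpha_5}\}_0$, $\{\beta_4\}_0=\{1\otimes e^{\alpha_1}\}_0+\{1\otimes e^{\alpha_6}\}_0$, $\{1\otimes e^{-\theta}\}_1$. Coset conformal vector $\omega=\frac1{10}[(-\lambda_1+\lambda_6)(-1)^2+(\lambda_3-\lambda_5)(-1)^2+(\lambda_1-\lambda_3+\lambda_5-\lambda_6)(-1)^2]\otimes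 e^0+\frac15(-1\otimes e^{\pm\gamma_1}-1\otimes e^{\pm\gamma_2}+1\otimes e^{\pm\gamma_3})$, $\gamma_1=\alpha_1-\alpha_6$, $\gamma_2=\alpha_3-\alpha_5$, $\gamma_3=\gamma_1+\gamma_2$, $1\otimes e^{\pm\gamma}:=1\otimes e^\gamma+1\otimes e^{-\gamma}$; $L(n)=\{\omega\}_{n+1}$ on $V_P$ (Virasoro, $c=4/5$, commuting with $\tilde{\mathfrak a}$). $\Omega_0$ is the basic level one $F_4^{(1)}$ weight and $W^{\Omega_0}$ its irreducible module. A nonzero $v$ is a highest weight vector of type $Vir(\frac45,h)\otimes W^{\Omega_j}$ if (HW1) $\{1\otimes e^{-\theta}\}_1v=0$; (HW2) $\{\beta_i\}_0v=0$, $i=1,\dots,4$; (HW3) $L(1)v=L(2)v=0$; (HW4) $L(0)v=hv$; (HW5) $v\in\bigoplus_kS(\hat{\mathfrak h}^-)\otimes e^{\nu_k}$ with $\mathrm{Proj}(\nu_k)=\omega_j$ ($\omega_0=0$). *)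

theory Defs
  imports Complex_Main "HOL-Library.Multiset" "HOL-Library.Function_Algebras"
begin

datatype idx = I1 | I2 | I3 | I4 | I5 | I6

lemma UNIV_idx: "(UNIV :: idx set) = {I1,I2,I3,I4,I5,I6}"
  using idx.exhaust by auto

instance idx :: finite
  by standard (simp add: UNIV_idx)

text \<open>Conventions.
  wt : elements of P, in coordinates w.r.t. the fundamental weights lambda_i.
  rt : elements of Q, in coordinates w.r.t. the simple roots alpha_i.
  hv : elements of h = C (x) P, in coordinates w.r.t. the basis alpha_1..alpha_6.
  A basis vector of V_P = S(h^-) (x) C[P] is (M, beta) where M is a monomial in the
  Heisenberg generators a_i(-n) := alpha_i(-n) (n >= 1), encoded as the multiset of
  pairs (i, n), and beta is in P.  Vectors are functions basis => complex
  (finitely supported ones are the actual elements of V_P).\<close>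

type_synonym wt = "idx \<Rightarrow> int"
type_synonym rt = "idx \<Rightarrow> int"
type_synonym hv = "idx \<Rightarrow> complex"
type_synonym mono = "(idx \<times> nat) multiset"
type_synonym basis = "mono \<times> wt"
type_synonym vec = "basis \<Rightarrow> complex"

definition mk6 :: "'a \<Rightarrow> 'a \<Rightarrow> 'a \<Rightarrow> 'a \<Rightarrow> 'a \<Rightarrow> 'a \<Rightarrow> idx \<Rightarrow> 'a" where
  "mk6 a b c d e f = (\<lambda>k. case k of I1 \<Rightarrow> a | I2 \<Rightarrow> b | I3 \<Rightarrow> c | I4 \<Rightarrow> d | I5 \<Rightarrow> e | I6 \<Rightarrow> f)"

text \<open>Cartan matrix of E6: chain 1-3-4-5-6, node 2 attached to node 4.\<close>
definition cartan :: "idx \<Rightarrow> idx \<Rightarrow> int" where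
  "cartan i j = (if i = j then 2
     else if (i,j) \<in> {(I1,I3),(I3,I1),(I3,I4),(I4,I3),(I4,I5),(I5,I4),(I5,I6),(I6,I5),(I2,I4),(I4,I2)}
     then -1 else 0)"

definition form :: "hv \<Rightarrow> hv \<Rightarrow> complex" where
  "form h h' = (\<Sum>i\<in>UNIV. \<Sum>j\<in>UNIV. h i * of_int (cartan i j) * h' j)"

definition sroot :: "idx \<Rightarrow> rt" where
  "sroot j = (\<lambda>i. if i = j then 1 else 0)"

definition root_h :: "rt \<Rightarrow> hv" where
  "root_h a = (\<lambda>i. of_int (a i))"

text \<open>Fundamental weights written in the alpha-basis of h (inverse Cartan matrix).\<close>
definition fund :: "idx \<Rightarrow> hv" where
  "fund i = (case i of
      I1 \<Rightarrow> mk6 (4/3) 1 (5/3) 2 (4/3) (2/3)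
    | I2 \<Rightarrow> mk6 1 2 2 3 2 1
    | I3 \<Rightarrow> mk6 (5/3) 2 (10/3) 4 (8/3) (4/3)
    | I4 \<Rightarrow> mk6 2 3 4 6 4 2
    | I5 \<Rightarrow> mk6 (4/3) 2 (8/3) 4 (10/3) (5/3)
    | I6 \<Rightarrow> mk6 (2/3) 1 (4/3) 2 (5/3) (4/3))"

lemma fund_dual: "form (root_h (sroot j)) (fund i) = (if i = j then 1 else 0)"
  by (cases i; cases j; simp add: form_def root_h_def sroot_def fund_def mk6_def
      cartan_def UNIV_idx)

definition lw :: "idx \<Rightarrow> wt" where
  "lw i = (\<lambda>j. if j = i then 1 else 0)"

definition wt_h :: "wt \<Rightarrow> hv" where
  "wt_h \<nu> = (\<lambda>k. \<Sum>i\<in>UNIV. of_int (\<nu> i) * fund i k)"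

definition root_wt :: "rt \<Rightarrow> wt" where
  "root_wt a = (\<lambda>j. \<Sum>i\<in>UNIV. a i * cartan i j)"

definition hpair :: "hv \<Rightarrow> wt \<Rightarrow> complex" where
  "hpair h \<beta> = (\<Sum>i\<in>UNIV. h i * of_int (\<beta> i))"

definition rpair :: "rt \<Rightarrow> wt \<Rightarrow> int" where
  "rpair a \<beta> = (\<Sum>i\<in>UNIV. a i * \<beta> i)"

text \<open>The bimultiplicative sign eps, determined by its values on fundamental weights.\<close>
definition epsE :: "idx \<Rightarrow> idx \<Rightarrow> bool" where
  "epsE i j \<longleftrightarrow> (i,j) \<in> {(I2,I1),(I2,I6),(I3,I1),(I4,I2),(I5,I6)}"

definition eps :: "wt \<Rightarrow> wt \<Rightarrow> complex" where
  "eps \<nu> \<mu> = (-1) ^ nat ((\<Sum>i\<in>UNIV. \<Sum>j\<in>UNIV. if epsE i j then \<nu> i * \<mu> j else 0) mod 2)"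

definition single :: "basis \<Rightarrow> vec" where
  "single b = (\<lambda>b'. if b' = b then 1 else 0)"

definition smul :: "complex \<Rightarrow> vec \<Rightarrow> vec" where
  "smul c v = (\<lambda>b. c * v b)"

text \<open>Linear extension of an operator given on basis vectors (correct on finitely supported vectors).\<close>
definition lin :: "(basis \<Rightarrow> vec) \<Rightarrow> vec \<Rightarrow> vec" where
  "lin f v = (\<lambda>b'. \<Sum>b\<in>{b. v b \<noteq> 0}. v b * f b b')"

definition heis_b :: "hv \<Rightarrow> int \<Rightarrow> basis \<Rightarrow> vec" where
  "heis_b h n b = (case b of (M, \<beta>) \<Rightarrow>
     if n < 0 then (\<lambda>b'. \<Sum>i\<in>UNIV. h i * single (M + {#(i, nat (-n))#}, \<beta>) b')
     else if n = 0 then smul (hpair h \<beta>) (single (M, \<beta>))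
     else (\<lambda>b'. \<Sum>j\<in>UNIV. of_nat (count M (j, nat n)) * of_int n * form h (root_h (sroot j))
                       * single (M - {#(j, nat n)#}, \<beta>) b'))"

definition heis :: "hv \<Rightarrow> int \<Rightarrow> vec \<Rightarrow> vec" where
  "heis h n = lin (heis_b h n)"

text \<open>Coefficient of z^p in exp(sum_{k>=1} A_k z^k / k), for commuting operators A_k,
  via  p E_p = sum_{k=1}^p A_k E_{p-k}.\<close>
function expc :: "(nat \<Rightarrow> vec \<Rightarrow> vec) \<Rightarrow> nat \<Rightarrow> vec \<Rightarrow> vec" where
  "expc A 0 v = v"
| "expc A (Suc p) v =
     smul (1 / of_nat (Suc p)) (\<lambda>b. \<Sum>k\<in>{1..Suc p}. A k (expc A (Suc p - k) v) b)"
  by pat_completeness auto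
termination by (relation "measure (\<lambda>(A,p,v). p)") auto

text \<open>E^-(alpha,z) = exp(sum alpha(-k) z^k / k) and
      E^+(alpha,z) = exp(- sum alpha(k) z^(-k) / k): coefficients of z^p resp. z^(-q).\<close>
definition Em :: "rt \<Rightarrow> nat \<Rightarrow> vec \<Rightarrow> vec" where
  "Em a = expc (\<lambda>k. heis (root_h a) (- int k))"

definition Ep :: "rt \<Rightarrow> nat \<Rightarrow> vec \<Rightarrow> vec" where
  "Ep a = expc (\<lambda>k v. smul (-1) (heis (root_h a) (int k) v))"

text \<open>Coefficient of z^m in Y(1 (x) e^alpha, z) applied to a basis vector.\<close>
definition Yexp_b :: "rt \<Rightarrow> int \<Rightarrow> basis \<Rightarrow> vec" where
  "Yexp_b a m b = (case b of (M, \<beta>) \<Rightarrow>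
     (let c = rpair a \<beta>;
          T = (\<lambda>q::nat. smul (eps (root_wt a) \<beta>)
                 (Em a (nat (m - c + int q)) (Ep a q (single (M, root_wt a + \<beta>)))))
      in (\<lambda>b'. \<Sum>q\<in>{q. m - c + int q \<ge> 0 \<and> T q \<noteq> 0}. T q b')))"

text \<open>The mode {1 (x) e^alpha}_n, i.e. coefficient of z^(-n-1).\<close>
definition Yc :: "rt \<Rightarrow> int \<Rightarrow> vec \<Rightarrow> vec" where
  "Yc a n = lin (Yexp_b a (- n - 1))"

definition nord :: "hv \<Rightarrow> int \<Rightarrow> hv \<Rightarrow> int \<Rightarrow> vec \<Rightarrow> vec" where
  "nord h m h' n v = (if 0 \<le> m \<and> n < 0 then heis h' n (heis h m v) else heis h m (heis h' n v))"

text \<open>The mode {h(-1)h'(-1) (x) e^0}_N = sum_{m+n=N-1} :h(m)h'(n): .\<close>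
definition Yhh_b :: "hv \<Rightarrow> hv \<Rightarrow> int \<Rightarrow> basis \<Rightarrow> vec" where
  "Yhh_b h h' N b = (\<lambda>b'. \<Sum>m\<in>{m. nord h m h' (N - 1 - m) (single b) \<noteq> 0}.
                              nord h m h' (N - 1 - m) (single b) b')"

definition Yhh :: "hv \<Rightarrow> hv \<Rightarrow> int \<Rightarrow> vec \<Rightarrow> vec" where
  "Yhh h h' N = lin (Yhh_b h h' N)"

definition gam1 :: rt where "gam1 = sroot I1 - sroot I6"
definition gam2 :: rt where "gam2 = sroot I3 - sroot I5"
definition gam3 :: rt where "gam3 = gam1 + gam2"

definition theta :: rt where
  "theta = mk6 1 2 2 3 2 1"

text \<open>L(n) = {omega}_{n+1} for the coset conformal vector omega.\<close>
definition Lop :: "int \<Rightarrow> vec \<Rightarrow> vec" where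
  "Lop n v =
    (let h1 = wt_h (lw I6 - lw I1); h2 = wt_h (lw I3 - lw I5);
         h3 = wt_h (lw I1 - lw I3 + lw I5 - lw I6); k = n + 1
     in smul (1/10) (Yhh h1 h1 k v + Yhh h2 h2 k v + Yhh h3 h3 k v)
      + smul (1/5) (- (Yc gam1 k v + Yc (- gam1) k v)
                    - (Yc gam2 k v + Yc (- gam2) k v)
                    + (Yc gam3 k v + Yc (- gam3) k v)))"

definition raise1 :: "vec \<Rightarrow> vec" where "raise1 v = Yc (sroot I2) 0 v"
definition raise2 :: "vec \<Rightarrow> vec" where "raise2 v = Yc (sroot I4) 0 v"
definition raise3 :: "vec \<Rightarrow> vec" where "raise3 v = Yc (sroot I3) 0 v + Yc (sroot I5) 0 v"
definition raise4 :: "vec \<Rightarrow> vec" where "raise4 v = Yc (sroot I1) 0 v + Yc (sroot I6) 0 v"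

definition tau :: "idx \<Rightarrow> idx" where
  "tau i = (case i of I1 \<Rightarrow> I6 | I6 \<Rightarrow> I1 | I3 \<Rightarrow> I5 | I5 \<Rightarrow> I3 | _ \<Rightarrow> i)"

definition proj :: "wt \<Rightarrow> idx \<Rightarrow> rat" where
  "proj \<nu> = (\<lambda>i. (of_int (\<nu> i) + of_int (\<nu> (tau i))) / 2)"

definition in_VLambda1 :: "vec \<Rightarrow> bool" where
  "in_VLambda1 v \<longleftrightarrow> finite {b. v b \<noteq> 0} \<and>
     (\<forall>b. v b \<noteq> 0 \<longrightarrow> (\<exists>a::rt. snd b = lw I1 + root_wt a))"

definition hw_vector :: "complex \<Rightarrow> (idx \<Rightarrow> rat) \<Rightarrow> vec \<Rightarrow> bool" where
  "hw_vector h \<omega>j v \<longleftrightarrow>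
     v \<noteq> 0 \<and> finite {b. v b \<noteq> 0}
   \<and> Yc (- theta) 1 v = 0
   \<and> raise1 v = 0 \<and> raise2 v = 0 \<and> raise3 v = 0 \<and> raise4 v = 0
   \<and> Lop 1 v = 0 \<and> Lop 2 v = 0
   \<and> Lop 0 v = smul h v
   \<and> (\<forall>b. v b \<noteq> 0 \<longrightarrow> proj (snd b) = \<omega>j)"

definition Rvec :: vec where
  "Rvec = single ({#}, lw I6 - lw I1) + single ({#}, lw I3 - lw I5)
          - single ({#}, lw I1 - lw I3 + lw I5 - lw I6)"

end

theory Submission
  imports Defs
begin

lemma sum_UNIV_idx: "sum f (UNIV::idx set) = f I1 + f I2 + f I3 + f I4 + f I5 + f I6"
  by (simp add: UNIV_idx add.assoc)

lemma all_idx: "(\<forall>x::idx. P x) \<longleftrightarrow> P I1 \<and> P I2 \<and> P I3 \<and> P I4 \<and> P I5 \<and> P I6"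
  by (metis idx.exhaust)

lemma mk6_eq: "mk6 a b c d e f = mk6 a' b' c' d' e' f' \<longleftrightarrow>
   a = a' \<and> b = b' \<and> c = c' \<and> d = d' \<and> e = e' \<and> f = f'"
  by (auto simp: mk6_def fun_eq_iff all_idx)

lemma mk6_add: "mk6 a b c d e f + mk6 a' b' c' d' e' f' = mk6 (a+a') (b+b') (c+c') (d+d') (e+e') (f+f')"
  by (auto simp: mk6_def fun_eq_iff split: idx.splits)
lemma mk6_diff: "mk6 a b c d e f - mk6 a' b' c' d' e' f' = mk6 (a-a') (b-b') (c-c') (d-d') (e-e') (f-f')"
  by (auto simp: mk6_def fun_eq_iff split: idx.splits)
lemma mk6_uminus: "- mk6 a b c d e f = mk6 (-a) (-b) (-c) (-d) (-e) (-f)"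
  by (auto simp: mk6_def fun_eq_iff split: idx.splits)
lemma mk6_app: "mk6 a b c d e f I1 = a" "mk6 a b c d e f I2 = b" "mk6 a b c d e f I3 = c"
  "mk6 a b c d e f I4 = d" "mk6 a b c d e f I5 = e" "mk6 a b c d e f I6 = f"
  by (simp_all add: mk6_def)

lemma lw_mk6: "lw I1 = mk6 1 0 0 0 0 0" "lw I2 = mk6 0 1 0 0 0 0" "lw I3 = mk6 0 0 1 0 0 0"
  "lw I4 = mk6 0 0 0 1 0 0" "lw I5 = mk6 0 0 0 0 1 0" "lw I6 = mk6 0 0 0 0 0 1"
  by (auto simp: lw_def mk6_def fun_eq_iff split: idx.splits)
lemma sroot_mk6: "sroot I1 = mk6 1 0 0 0 0 0" "sroot I2 = mk6 0 1 0 0 0 0" "sroot I3 = mk6 0 0 1 0 0 0"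
  "sroot I4 = mk6 0 0 0 1 0 0" "sroot I5 = mk6 0 0 0 0 1 0" "sroot I6 = mk6 0 0 0 0 0 1"
  by (auto simp: sroot_def mk6_def fun_eq_iff split: idx.splits)

lemma root_wt_mk6: "root_wt (mk6 a b c d e f) =
  mk6 (2*a - c) (2*b - d) (2*c - a - d) (2*d - b - c - e) (2*e - d - f) (2*f - e)"
  by (auto simp: root_wt_def mk6_def fun_eq_iff sum_UNIV_idx cartan_def split: idx.splits)

lemma rpair_mk6: "rpair (mk6 a b c d e f) (mk6 a' b' c' d' e' f') = a*a'+b*b'+c*c'+d*d'+e*e'+f*f'"
  by (simp add: rpair_def sum_UNIV_idx mk6_app)

lemma eps_mk6: "eps (mk6 a b c d e f) (mk6 a' b' c' d' e' f') =
   (-1) ^ nat ((b*a' + b*f' + c*a' + d*b' + e*f') mod 2)"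
  by (simp add: eps_def sum_UNIV_idx epsE_def mk6_app algebra_simps)

lemma lin_support:
  assumes "finite S" "{b. v b \<noteq> 0} \<subseteq> S"
  shows "lin f v = (\<lambda>b'. \<Sum>b\<in>S. v b * f b b')"
proof
  fix b'
  show "lin f v b' = (\<Sum>b\<in>S. v b * f b b')"
    unfolding lin_def
    by (rule sum.mono_neutral_left) (use assms in auto)
qed

lemma lin_zero: "lin f 0 = 0"
  by (simp add: lin_def fun_eq_iff)

lemma lin_single: "lin f (single b) = f b"
  by (subst lin_support[of "{b}"]) (auto simp: single_def)

lemma lin_smul_single: "lin f (smul c (single b)) = smul c (f b)"
  by (subst lin_support[of "{b}"]) (auto simp: single_def smul_def fun_eq_iff)

lemma smul_zero[simp]: "smul c 0 = 0" by (simp add: smul_def fun_eq_iff)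

lemma heis_zero[simp]: "heis h n 0 = 0" by (simp add: heis_def lin_zero)

lemma heis_vac_pos: "n > 0 \<Longrightarrow> heis h n (single ({#}, \<beta>)) = 0"
  by (simp add: heis_def lin_single heis_b_def fun_eq_iff)

lemma heis_vac_zero: "heis h 0 (single ({#}, \<beta>)) = smul (hpair h \<beta>) (single ({#}, \<beta>))"
  by (simp add: heis_def lin_single heis_b_def)

lemma heis_smul_vac_pos: "n > 0 \<Longrightarrow> heis h n (smul c (single ({#}, \<beta>))) = 0"
  unfolding heis_def lin_smul_single by (simp add: heis_b_def fun_eq_iff smul_def)

lemma heis_smul_vac_zero: "heis h 0 (smul c (single ({#}, \<beta>))) = smul (c * hpair h \<beta>) (single ({#}, \<beta>))"
  unfolding heis_def lin_smul_single by (simp add: heis_b_def smul_def fun_eq_iff)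

lemma expc_zero:
  assumes "\<And>k. A k 0 = 0"
  shows "expc A p 0 = 0"
proof (induction p rule: less_induct)
  case (less p)
  show ?case
  proof (cases p)
    case 0 then show ?thesis by simp
  next
    case (Suc q)
    have "\<And>k. k \<in> {1..Suc q} \<Longrightarrow> expc A (Suc q - k) 0 = 0"
      by (rule less.IH) (use Suc in auto)
    then have "\<And>b. (\<Sum>k\<in>{1..Suc q}. A k (expc A (Suc q - k) 0) b) = 0"
      using assms by (intro sum.neutral) simp
    then show ?thesis using Suc by (simp only: expc.simps) (simp add: smul_def fun_eq_iff)
  qed
qed

lemma expc_vac:
  assumes "\<And>k. A k 0 = 0" "\<And>k. k \<ge> 1 \<Longrightarrow> A k v = 0"
  shows "p \<ge> 1 \<Longrightarrow> expc A p v = 0"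
proof (induction p rule: less_induct)
  case (less p)
  then obtain q where Suc: "p = Suc q" by (cases p) auto
  have "\<And>k. k \<in> {1..Suc q} \<Longrightarrow> A k (expc A (Suc q - k) v) = 0"
  proof -
    fix k assume k: "k \<in> {1..Suc q}"
    show "A k (expc A (Suc q - k) v) = 0"
    proof (cases "Suc q - k = 0")
      case True then show ?thesis using k assms(2) by simp
    next
      case False
      have "expc A (Suc q - k) v = 0" by (rule less.IH) (use Suc k False in auto)
      then show ?thesis using assms(1) by simp
    qed
  qed
  then have "\<And>b. (\<Sum>k\<in>{1..Suc q}. A k (expc A (Suc q - k) v) b) = 0"
    by (intro sum.neutral) simp
  then show ?case using Suc by (simp only: expc.simps) (simp add: smul_def fun_eq_iff)
qed

lemma Ep_vac: "q \<ge> 1 \<Longrightarrow> Ep a q (single ({#}, \<beta>)) = 0"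
  unfolding Ep_def
  by (rule expc_vac) (auto simp: heis_vac_pos)

lemma Em_zero: "Em a p 0 = 0"
  unfolding Em_def by (rule expc_zero) simp

lemma Yexp_vac:
  assumes "m \<le> rpair a \<beta>"
  shows "Yexp_b a m ({#}, \<beta>) = (if m = rpair a \<beta> then smul (eps (root_wt a) \<beta>) (single ({#}, root_wt a + \<beta>)) else 0)"
proof -
  define c where "c = rpair a \<beta>"
  define T where "T = (\<lambda>q::nat. smul (eps (root_wt a) \<beta>)
                 (Em a (nat (m - c + int q)) (Ep a q (single ({#}, root_wt a + \<beta>)))))"
  have Tq: "q \<ge> 1 \<Longrightarrow> T q = 0" for q by (simp add: T_def Ep_vac Em_zero)
  have T0: "T 0 = smul (eps (root_wt a) \<beta>) (single ({#}, root_wt a + \<beta>))" if "m = c"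
    using that by (simp add: T_def Em_def Ep_def)
  have eps_nz: "eps x y \<noteq> 0" for x y by (simp add: eps_def)
  have T0nz: "T 0 \<noteq> 0" if "m = c"
  proof
    assume "T 0 = 0"
    then have "T 0 ({#}, root_wt a + \<beta>) = 0" by simp
    then show False using that eps_nz by (simp add: T0 smul_def single_def)
  qed
  have S: "{q. m - c + int q \<ge> 0 \<and> T q \<noteq> 0} = (if m = c then {0} else {})"
    using assms Tq T0nz unfolding c_def[symmetric]
    by (auto simp: not_less_eq_eq)
  have Y: "Yexp_b a m ({#}, \<beta>) = (\<lambda>b'. \<Sum>q\<in>{q. m - c + int q \<ge> 0 \<and> T q \<noteq> 0}. T q b')"
    by (simp add: Yexp_b_def c_def T_def Let_def)
  show ?thesis
    unfolding Y S c_def[symmetric]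
    using T0 by (auto simp: fun_eq_iff)
qed

lemma nord_vac:
  assumes "N \<ge> 1"
  shows "nord h m h' (N - 1 - m) (single ({#}, \<beta>)) =
    (if m = 0 \<and> N = 1 then smul (hpair h \<beta> * hpair h' \<beta>) (single ({#}, \<beta>)) else 0)"
proof (cases "m > 0")
  case True
  then show ?thesis using assms
    by (cases "N - 1 - m = 0") (auto simp: nord_def heis_vac_pos heis_smul_vac_pos heis_vac_zero)
next
  case False
  show ?thesis
  proof (cases "m = 0")
    case True
    then show ?thesis using assms
      by (cases "N = 1") (auto simp: nord_def heis_vac_pos heis_vac_zero heis_smul_vac_zero mult.commute)
  next
    case False
    then have "N - 1 - m > 0" using \<open>\<not> m > 0\<close> assms by simp
    then show ?thesis using False \<open>\<not> m > 0\<close>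
      by (auto simp: nord_def heis_vac_pos)
  qed
qed

lemma Yhh_vac:
  assumes "N \<ge> 1"
  shows "Yhh_b h h' N ({#}, \<beta>) =
    (if N = 1 then smul (hpair h \<beta> * hpair h' \<beta>) (single ({#}, \<beta>)) else 0)"
proof -
  have e: "nord h m h' (N - 1 - m) (single ({#}, \<beta>)) =
    (if m = 0 \<and> N = 1 then smul (hpair h \<beta> * hpair h' \<beta>) (single ({#}, \<beta>)) else 0)" for m
    using nord_vac[OF assms] .
  show ?thesis
  proof (cases "N = 1 \<and> smul (hpair h \<beta> * hpair h' \<beta>) (single ({#}, \<beta>)) \<noteq> 0")
    case True
    then have S: "{m. nord h m h' (N - 1 - m) (single ({#}, \<beta>)) \<noteq> 0} = {0}"
      unfolding e by auto
    show ?thesis unfolding Yhh_b_def S using True e[of 0] by (auto simp: fun_eq_iff)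
  next
    case False
    then have S: "{m. nord h m h' (N - 1 - m) (single ({#}, \<beta>)) \<noteq> 0} = {}"
      unfolding e by auto
    show ?thesis unfolding Yhh_b_def S using False by (auto simp: fun_eq_iff)
  qed
qed

definition "B1 = ({#}, mk6 (-1) 0 0 0 0 (1::int))"
definition "B2 = ({#}, mk6 0 0 1 0 (-1) (0::int))"
definition "B3 = ({#}, mk6 1 0 (-1) 0 1 (-1::int))"

lemma Rvec_eq: "Rvec = single B1 + single B2 - single B3"
  by (simp add: Rvec_def B1_def B2_def B3_def lw_mk6 mk6_diff mk6_add)

lemma B_distinct: "B1 \<noteq> B2" "B1 \<noteq> B3" "B2 \<noteq> B3"
  by (simp_all add: B1_def B2_def B3_def mk6_eq)

lemma Rvec_vals: "Rvec B1 = 1" "Rvec B2 = 1" "Rvec B3 = -1"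
  using B_distinct B_distinct[symmetric] by (auto simp: Rvec_eq single_def)

lemma Rvec_supp: "{b. Rvec b \<noteq> 0} = {B1, B2, B3}"
  using B_distinct B_distinct[symmetric] by (auto simp: Rvec_eq single_def)

lemma lin_Rvec: "lin f Rvec = (\<lambda>b'. f B1 b' + f B2 b' - f B3 b')"
  by (subst lin_support[of "{B1,B2,B3}"]) (simp_all add: Rvec_supp Rvec_vals B_distinct B_distinct[symmetric] algebra_simps)

lemma Yc_R: "Yc a n Rvec = (\<lambda>b'. Yexp_b a (-n-1) B1 b' + Yexp_b a (-n-1) B2 b' - Yexp_b a (-n-1) B3 b')"
  by (simp add: Yc_def lin_Rvec)

lemma Yhh_R: "Yhh h h' N Rvec = (\<lambda>b'. Yhh_b h h' N B1 b' + Yhh_b h h' N B2 b' - Yhh_b h h' N B3 b')"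
  by (simp add: Yhh_def lin_Rvec)

lemmas comp = Yc_R Yhh_R B1_def B2_def B3_def Yexp_vac Yhh_vac sroot_mk6 lw_mk6 mk6_diff mk6_add mk6_uminus
  root_wt_mk6 rpair_mk6 eps_mk6 mk6_eq smul_def single_def fun_eq_iff

lemma r4: "raise4 Rvec = 0"
  by (simp add: raise4_def comp)

lemma r1: "raise1 Rvec = 0" by (simp add: raise1_def comp)
lemma r2: "raise2 Rvec = 0" by (simp add: raise2_def comp)
lemma r3: "raise3 Rvec = 0" by (simp add: raise3_def comp)
lemma rth: "Yc (- theta) 1 Rvec = 0" by (simp add: theta_def comp)

lemma hpair_wt: "hpair (wt_h (mk6 a b c d e f)) (mk6 a' b' c' d' e' f') =
  of_int a * (4/3*a' + b' + 5/3*c' + 2*d' + 4/3*e' + 2/3*f')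
+ of_int b * (a' + 2*b' + 2*c' + 3*d' + 2*e' + f')
+ of_int c * (5/3*a' + 2*b' + 10/3*c' + 4*d' + 8/3*e' + 4/3*f')
+ of_int d * (2*a' + 3*b' + 4*c' + 6*d' + 4*e' + 2*f')
+ of_int e * (4/3*a' + 2*b' + 8/3*c' + 4*d' + 10/3*e' + 5/3*f')
+ of_int f * (2/3*a' + b' + 4/3*c' + 2*d' + 5/3*e' + 4/3*f')"
  by (simp add: hpair_def wt_h_def sum_UNIV_idx fund_def mk6_app algebra_simps)

lemma L1: "Lop 1 Rvec = 0" by (simp add: Lop_def gam1_def gam2_def gam3_def comp)
lemma L2: "Lop 2 Rvec = 0" by (simp add: Lop_def gam1_def gam2_def gam3_def comp)
lemma L0: "Lop 0 Rvec = smul (2/3) Rvec"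
proof -
  have R: "smul (2/3) Rvec = (\<lambda>b. 2/3 * (single B1 b + single B2 b - single B3 b))"
    by (simp add: Rvec_eq smul_def)
  show ?thesis unfolding R
    by (simp add: Lop_def gam1_def gam2_def gam3_def comp hpair_wt)
qed

lemma Rnz: "Rvec \<noteq> 0"
proof
  assume "Rvec = 0"
  then have "Rvec B1 = 0" by simp
  then show False by (simp add: Rvec_vals)
qed

lemma inV: "in_VLambda1 Rvec"
proof -
  have w1: "snd B1 = lw I1 + root_wt (mk6 (-2) (-1) (-2) (-2) (-1) 0)"
    by (simp add: B1_def lw_mk6 root_wt_mk6 mk6_add)
  have w2: "snd B2 = lw I1 + root_wt (mk6 (-1) (-1) (-1) (-2) (-2) (-1))"
    by (simp add: B2_def lw_mk6 root_wt_mk6 mk6_add)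
  have w3: "snd B3 = lw I1 + root_wt (mk6 (-1) (-1) (-2) (-2) (-1) (-1))"
    by (simp add: B3_def lw_mk6 root_wt_mk6 mk6_add)
  have "\<forall>b. Rvec b \<noteq> 0 \<longrightarrow> (\<exists>a::rt. snd b = lw I1 + root_wt a)"
  proof (intro allI impI)
    fix b assume "Rvec b \<noteq> 0"
    then have "b \<in> {B1,B2,B3}" using Rvec_supp by blast
    then show "\<exists>a::rt. snd b = lw I1 + root_wt a" using w1 w2 w3 by blast
  qed
  then show ?thesis unfolding in_VLambda1_def Rvec_supp by simp
qed

lemma projR: "\<forall>b. Rvec b \<noteq> 0 \<longrightarrow> proj (snd b) = (\<lambda>_. 0)"
proof (intro allI impI)
  fix b assume "Rvec b \<noteq> 0"
  then have "b \<in> {B1,B2,B3}" using Rvec_supp by blast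
  then show "proj (snd b) = (\<lambda>_. 0)"
    by (auto simp: B1_def B2_def B3_def proj_def tau_def fun_eq_iff all_idx mk6_app)
qed

theorem lemma6p15:
  shows "in_VLambda1 Rvec \<and> hw_vector (2/3) (\<lambda>_. 0) Rvec"
  unfolding hw_vector_def
  using inV Rnz rth r1 r2 r3 r4 L0 L1 L2 projR Rvec_supp by simp

end
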